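(* Let $C$ be a projective completely regular linear code in $\mathbb{F}_q^n$ (the Hamming space $H(n,q)$) with covering radius $\rho$, and for $0\le i\le\rho$ let $d_i$ be the number of cosets of $C$ of weight $i$. Then $d_i^2\ge d_{i-1}d_{i+1}$ for all $1\le i\le \rho-1$.
   Context: Weights are Hamming weights. A coset of a linear code $C$ is a translate $u+C$; its weight is the minimum weight of its elements; the covering radius $\rho$ is the largest coset weight. $C$ is completely regular if the weight distribution of every coset depends only on the weight of that coset. $C$ is projective if a generator matrix of $C$ has no zero column and no two columns that are scalar multiples of each other. *)

theory Defs
  imports Main
begin

text \<open>Vectors of F_q^n are functions from a finite index type 'n (the n coordinates)
  into a finite field 'a (F_q).\<close>

definition hwt :: "('n::finite \<Rightarrow> 'a::{finite,field}) \<Rightarrow> nat" where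
  "hwt x = card {i. x i \<noteq> 0}"

definition linear_code :: "('n::finite \<Rightarrow> 'a::{finite,field}) set \<Rightarrow> bool" where
  "linear_code C \<longleftrightarrow> (\<lambda>i. 0) \<in> C
     \<and> (\<forall>x\<in>C. \<forall>y\<in>C. (\<lambda>i. x i + y i) \<in> C)
     \<and> (\<forall>c. \<forall>x\<in>C. (\<lambda>i. c * x i) \<in> C)"

definition generator_matrix ::
  "('n::finite \<Rightarrow> 'a::{finite,field}) set \<Rightarrow> nat \<Rightarrow> (nat \<Rightarrow> 'n \<Rightarrow> 'a) \<Rightarrow> bool" where
  "generator_matrix C k G \<longleftrightarrow>
     C = {(\<lambda>i. \<Sum>r<k. a r * G r i) | a. True}
     \<and> (\<forall>a. (\<lambda>i. \<Sum>r<k. a r * G r i) = (\<lambda>i. 0) \<longrightarrow> (\<forall>r<k. a r = 0))"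

definition projective_code :: "('n::finite \<Rightarrow> 'a::{finite,field}) set \<Rightarrow> bool" where
  "projective_code C \<longleftrightarrow> (\<exists>k G. generator_matrix C k G
     \<and> (\<forall>i. \<exists>r<k. G r i \<noteq> 0)
     \<and> (\<forall>i j c. i \<noteq> j \<longrightarrow> \<not> (\<forall>r<k. G r j = c * G r i)))"

definition coset :: "('n::finite \<Rightarrow> 'a::{finite,field}) set \<Rightarrow> ('n \<Rightarrow> 'a) \<Rightarrow> ('n \<Rightarrow> 'a) set" where
  "coset C u = {(\<lambda>i. u i + c i) | c. c \<in> C}"

definition coset_weight :: "('n::finite \<Rightarrow> 'a::{finite,field}) set \<Rightarrow> nat" where
  "coset_weight D = Min (hwt ` D)"

definition cosets :: "('n::finite \<Rightarrow> 'a::{finite,field}) set \<Rightarrow> ('n \<Rightarrow> 'a) set set" where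
  "cosets C = {coset C u | u. True}"

definition covering_radius :: "('n::finite \<Rightarrow> 'a::{finite,field}) set \<Rightarrow> nat" where
  "covering_radius C = Max (coset_weight ` cosets C)"

definition num_cosets :: "('n::finite \<Rightarrow> 'a::{finite,field}) set \<Rightarrow> nat \<Rightarrow> nat" where
  "num_cosets C i = card {D \<in> cosets C. coset_weight D = i}"

definition weight_distribution :: "('n::finite \<Rightarrow> 'a::{finite,field}) set \<Rightarrow> nat \<Rightarrow> nat" where
  "weight_distribution D j = card {x \<in> D. hwt x = j}"

definition completely_regular :: "('n::finite \<Rightarrow> 'a::{finite,field}) set \<Rightarrow> bool" where
  "completely_regular C \<longleftrightarrow> (\<forall>D\<in>cosets C. \<forall>D'\<in>cosets C.
     coset_weight D = coset_weight D' \<longrightarrow> weight_distribution D = weight_distribution D')"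

end

theory Submission
  imports Defs
begin


definition vadd :: "('n \<Rightarrow> 'a::plus) \<Rightarrow> ('n \<Rightarrow> 'a) \<Rightarrow> 'n \<Rightarrow> 'a" where
  "vadd x y = (\<lambda>i. x i + y i)"
definition ev :: "'n \<Rightarrow> 'a::zero \<Rightarrow> 'n \<Rightarrow> 'a" where
  "ev k a = (\<lambda>j. if j = k then a else 0)"

lemma vadd_comm3: "vadd (vadd x (y::'n\<Rightarrow>'a::ab_semigroup_add)) z = vadd (vadd x z) y"
  by (simp add: vadd_def fun_eq_iff ac_simps)

lemma vadd_ev_cancel: "vadd (vadd x (ev k (a::'a::ab_group_add))) (ev k (-a)) = x"
  by (simp add: vadd_def ev_def fun_eq_iff)

lemma hwt_ev:
  fixes y :: "'n::finite \<Rightarrow> 'a::{finite,field}"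
  shows "hwt (vadd y (ev k a)) = (if y k = 0 then (if a = 0 then hwt y else Suc (hwt y))
          else if y k + a = 0 then hwt y - 1 else hwt y)"
proof -
  let ?S = "{i. y i \<noteq> 0}"
  have h: "hwt (vadd y (ev k a)) = card {i. y i + (if i = k then a else 0) \<noteq> 0}"
    by (simp add: hwt_def vadd_def ev_def)
  show ?thesis
  proof (cases "y k = 0")
    case True
    show ?thesis
    proof (cases "a = 0")
      case True
      have "{i. y i + (if i = k then a else 0) \<noteq> 0} = ?S" using True by auto
      then show ?thesis using h True \<open>y k = 0\<close> by (simp add: hwt_def)
    next
      case False
      have "{i. y i + (if i = k then a else 0) \<noteq> 0} = insert k ?S"
        using \<open>y k = 0\<close> False by auto
      then show ?thesis using h True False by (simp add: hwt_def)
    qed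
  next
    case False
    show ?thesis
    proof (cases "y k + a = 0")
      case True
      have "{i. y i + (if i = k then a else 0) \<noteq> 0} = ?S - {k}"
        using True by auto
      then show ?thesis using h True False by (simp add: hwt_def)
    next
      case F2: False
      have "{i. y i + (if i = k then a else 0) \<noteq> 0} = ?S"
        using False F2 by auto
      then show ?thesis using h False F2 by (simp add: hwt_def)
    qed
  qed
qed

lemma hwt_ev_le: "hwt (vadd (y::'n::finite \<Rightarrow> 'a::{finite,field}) (ev k a)) \<le> Suc (hwt y)"
  by (auto simp: hwt_ev)

lemma hwt_ev_ge: "hwt (y::'n::finite \<Rightarrow> 'a::{finite,field}) \<le> Suc (hwt (vadd y (ev k a)))"
  by (auto simp: hwt_ev)

lemma hwt_pos: "(y::'n::finite \<Rightarrow> 'a::{finite,field}) k \<noteq> 0 \<Longrightarrow> hwt y \<noteq> 0"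
  by (auto simp: hwt_def)

definition EE :: "('n \<times> 'a::zero) set" where "EE = {p. snd p \<noteq> 0}"

lemma card_down:
  fixes y :: "'n::finite \<Rightarrow> 'a::{finite,field}"
  shows "card {p\<in>EE. Suc (hwt (vadd y (ev (fst p) (snd p)))) = hwt y} = hwt y"
proof -
  have "{p\<in>EE. Suc (hwt (vadd y (ev (fst p) (snd p)))) = hwt y} = (\<lambda>k. (k, - y k)) ` {i. y i \<noteq> 0}"
  proof (intro set_eqI iffI)
    fix p assume "p \<in> {p\<in>EE. Suc (hwt (vadd y (ev (fst p) (snd p)))) = hwt y}"
    then show "p \<in> (\<lambda>k. (k, - y k)) ` {i. y i \<noteq> 0}"
      by (cases p) (auto simp: EE_def hwt_ev split: if_splits simp: add_eq_0_iff2 image_iff)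
  next
    fix p assume "p \<in> (\<lambda>k. (k, - y k)) ` {i. y i \<noteq> 0}"
    then obtain k where "p = (k, - y k)" "y k \<noteq> 0" by auto
    moreover have "hwt y \<noteq> 0"
      using \<open>y k \<noteq> 0\<close> by (auto simp: hwt_def)
    ultimately show "p \<in> {p\<in>EE. Suc (hwt (vadd y (ev (fst p) (snd p)))) = hwt y}"
      by (auto simp: EE_def hwt_ev)
  qed
  moreover have "inj_on (\<lambda>k. (k, - y k)) {i. y i \<noteq> 0}" by (auto intro: inj_onI)
  ultimately show ?thesis by (simp add: card_image hwt_def)
qed

lemma card_same:
  fixes y :: "'n::finite \<Rightarrow> 'a::{finite,field}"
  shows "card {p\<in>EE. hwt (vadd y (ev (fst p) (snd p))) = hwt y} = hwt y * (card (UNIV::'a set) - 2)"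
proof -
  have "{p\<in>EE. hwt (vadd y (ev (fst p) (snd p))) = hwt y} = Sigma {i. y i \<noteq> 0} (\<lambda>k. UNIV - {0, - y k})"
  proof (intro set_eqI iffI)
    fix p assume "p \<in> {p\<in>EE. hwt (vadd y (ev (fst p) (snd p))) = hwt y}"
    then show "p \<in> Sigma {i. y i \<noteq> 0} (\<lambda>k. UNIV - {0, - y k})"
    proof (cases p)
      case (Pair k a)
      have A: "a \<noteq> 0" "hwt (vadd y (ev k a)) = hwt y" using \<open>p \<in> _\<close> Pair by (auto simp: EE_def)
      show ?thesis
      proof (cases "y k = 0")
        case True then show ?thesis using A by (simp add: hwt_ev)
      next
        case False
        then have "hwt y \<noteq> 0" by (rule hwt_pos)
        then show ?thesis using A False Pair by (auto simp: hwt_ev add_eq_0_iff2 split: if_splits)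
      qed
    qed
  next
    fix p assume "p \<in> Sigma {i. y i \<noteq> 0} (\<lambda>k. UNIV - {0, - y k})"
    then show "p \<in> {p\<in>EE. hwt (vadd y (ev (fst p) (snd p))) = hwt y}"
      by (cases p) (auto simp: EE_def hwt_ev add_eq_0_iff2)
  qed
  moreover have "card (UNIV - {0, - y k} :: 'a set) = card (UNIV::'a set) - 2" if "y k \<noteq> 0" for k
    using that by (subst card_Diff_subset) auto
  ultimately show ?thesis by (simp add: card_SigmaI hwt_def)
qed



locale lc =
  fixes C :: "('n::finite \<Rightarrow> 'a::{finite,field}) set"
  assumes lin: "linear_code C"
begin

lemma zeroC: "(\<lambda>i. 0) \<in> C" using lin by (simp add: linear_code_def)
lemma addC: "x \<in> C \<Longrightarrow> y \<in> C \<Longrightarrow> vadd x y \<in> C" using lin by (simp add: linear_code_def vadd_def)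
lemma negC: "x \<in> C \<Longrightarrow> (\<lambda>i. - x i) \<in> C"
proof -
  assume "x \<in> C"
  then have "(\<lambda>i. (-1) * x i) \<in> C" using lin unfolding linear_code_def by blast
  then show ?thesis by simp
qed
lemma finC: "finite C" by simp
lemma neC: "C \<noteq> {}" using zeroC by auto

lemma coset_vadd: "coset C u = vadd u ` C"
  by (auto simp: coset_def vadd_def)

definition lev :: "('n \<Rightarrow> 'a) \<Rightarrow> nat" where "lev x = coset_weight (coset C x)"

lemma lev_Min: "lev x = Min ((\<lambda>c. hwt (vadd x c)) ` C)"
  by (simp add: lev_def coset_weight_def coset_vadd image_image)

lemma lev_le: "c \<in> C \<Longrightarrow> lev x \<le> hwt (vadd x c)"
  by (simp add: lev_Min)

lemma lev_ex: "\<exists>c\<in>C. hwt (vadd x c) = lev x"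
proof -
  have "lev x \<in> (\<lambda>c. hwt (vadd x c)) ` C" unfolding lev_Min by (rule Min_in) (use neC in auto)
  then show ?thesis by auto
qed

lemma coset_same: "c \<in> C \<Longrightarrow> coset C (vadd x c) = coset C x"
proof -
  assume c: "c \<in> C"
  show ?thesis unfolding coset_vadd
  proof (intro set_eqI iffI)
    fix y assume "y \<in> vadd (vadd x c) ` C"
    then obtain c' where "c' \<in> C" "y = vadd (vadd x c) c'" by auto
    then show "y \<in> vadd x ` C" using addC[OF c \<open>c' \<in> C\<close>]
      by (intro image_eqI[of _ _ "vadd c c'"]) (auto simp: vadd_def add.assoc)
  next
    fix y assume "y \<in> vadd x ` C"
    then obtain c' where c': "c' \<in> C" "y = vadd x c'" by auto
    have "vadd c' (\<lambda>i. - c i) \<in> C" using addC[OF c'(1) negC[OF c]] .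
    then show "y \<in> vadd (vadd x c) ` C" using c'
      by (intro image_eqI[of _ _ "vadd c' (\<lambda>i. - c i)"]) (auto simp: vadd_def fun_eq_iff)
  qed
qed

lemma lev_shift: "c \<in> C \<Longrightarrow> lev (vadd x c) = lev x"
  by (simp add: lev_def coset_same)

lemma lip1: "lev (vadd x (ev k a)) \<le> Suc (lev x)"
proof -
  obtain c where c: "c \<in> C" "hwt (vadd x c) = lev x" using lev_ex by blast
  have "lev (vadd x (ev k a)) \<le> hwt (vadd (vadd x (ev k a)) c)" by (rule lev_le[OF c(1)])
  also have "\<dots> = hwt (vadd (vadd x c) (ev k a))" by (simp add: vadd_comm3)
  also have "\<dots> \<le> Suc (hwt (vadd x c))" by (rule hwt_ev_le)
  finally show ?thesis using c by simp
qed

lemma lip2: "lev x \<le> Suc (lev (vadd x (ev k a)))"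
  using lip1[of "vadd x (ev k a)" k "-a"] by (simp add: vadd_ev_cancel)

definition f :: "nat \<Rightarrow> ('n \<Rightarrow> 'a) \<Rightarrow> nat" where
  "f j x = card {c\<in>C. hwt (vadd x c) = j}"

lemma inj_vadd: "inj (vadd (x :: 'n \<Rightarrow> 'a))"
  by (auto intro!: injI simp: vadd_def fun_eq_iff)

lemma wd: "weight_distribution (coset C x) j = f j x"
proof -
  have "{y \<in> coset C x. hwt y = j} = vadd x ` {c\<in>C. hwt (vadd x c) = j}"
    by (auto simp: coset_vadd)
  then show ?thesis unfolding weight_distribution_def f_def
    by (simp add: card_image inj_on_subset[OF inj_vadd])
qed

lemma f_low: "j < lev x \<Longrightarrow> f j x = 0"
  using lev_le[of _ x] by (force simp: f_def)

lemma f_pos: "f (lev x) x > 0"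
  using lev_ex[of x] by (auto simp: f_def card_gt_0_iff)

lemma lev_ex_down: "lev x = Suc m \<Longrightarrow> \<exists>p\<in>EE. lev (vadd x (ev (fst p) (snd p))) = m"
proof -
  assume L: "lev x = Suc m"
  obtain c where c: "c \<in> C" "hwt (vadd x c) = lev x" using lev_ex by blast
  let ?y = "vadd x c"
  have "hwt ?y \<noteq> 0" using c L by simp
  then obtain k where k: "?y k \<noteq> 0" by (auto simp: hwt_def)
  let ?e = "ev k (- ?y k)"
  have "hwt (vadd ?y ?e) = m" using k c L by (simp add: hwt_ev)
  moreover have "lev (vadd x ?e) \<le> hwt (vadd (vadd x ?e) c)" by (rule lev_le[OF c(1)])
  ultimately have "lev (vadd x ?e) \<le> m" by (simp add: vadd_comm3)
  moreover have "lev x \<le> Suc (lev (vadd x ?e))" by (rule lip2)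
  ultimately have "lev (vadd x ?e) = m" using L by simp
  then show ?thesis using k by (intro bexI[of _ "(k, - ?y k)"]) (auto simp: EE_def)
qed

end

locale crc = lc +
  assumes cr: "completely_regular C"
begin

lemma f_cr: "lev x = lev x' \<Longrightarrow> f j x = f j x'"
proof -
  assume "lev x = lev x'"
  then have "weight_distribution (coset C x) = weight_distribution (coset C x')"
    using cr unfolding completely_regular_def lev_def cosets_def by blast
  then show ?thesis by (metis wd)
qed

definition F :: "nat \<Rightarrow> nat \<Rightarrow> nat" where "F l j = f j (SOME z. lev z = l)"

lemma F_eq: "lev z = l \<Longrightarrow> f j z = F l j"
  unfolding F_def by (rule f_cr) (metis (mono_tags) someI)

end


definition ep :: "'n \<times> 'a \<Rightarrow> 'n \<Rightarrow> 'a::zero" where "ep p = ev (fst p) (snd p)"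

lemma cnt: "finite A \<Longrightarrow> card {x\<in>A. P x} = (\<Sum>x\<in>A. if P x then 1 else 0)"
proof -
  assume "finite A"
  then have "sum (\<lambda>_. 1::nat) {x\<in>A. P x} = (\<Sum>x\<in>A. if P x then 1 else 0)"
    by (rule sum.inter_filter)
  then show ?thesis by (simp only: card_eq_sum)
qed

lemma sum_if_const: "finite A \<Longrightarrow> (\<Sum>x\<in>A. if P x then (K::nat) else 0) = K * card {x\<in>A. P x}"
proof -
  assume "finite A"
  then have "sum (\<lambda>_. K) {x\<in>A. P x} = (\<Sum>x\<in>A. if P x then (K::nat) else 0)"
    by (rule sum.inter_filter)
  moreover have "sum (\<lambda>_. K) {x\<in>A. P x} = K * card {x\<in>A. P x}"
    by (simp only: sum_constant of_nat_id mult.commute)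
  ultimately show ?thesis by simp
qed

context crc begin

definition Nd where "Nd x = card {p\<in>EE. Suc (lev (vadd x (ep p))) = lev x}"
definition Ns where "Ns x = card {p\<in>EE. lev (vadd x (ep p)) = lev x}"
definition Nu where "Nu x = card {p\<in>EE. lev (vadd x (ep p)) = Suc (lev x)}"

lemma finEE: "finite (EE :: ('a \<times> 'b) set)" by (rule finite)

lemma swap: "(\<Sum>p\<in>EE. f j (vadd x (ep p))) = (\<Sum>c\<in>C. card {p\<in>EE. hwt (vadd (vadd x c) (ep p)) = j})"
proof -
  have "(\<Sum>p\<in>EE. f j (vadd x (ep p))) = (\<Sum>p\<in>EE. \<Sum>c\<in>C. if hwt (vadd (vadd x c) (ep p)) = j then 1 else 0)"
    unfolding f_def by (intro sum.cong refl) (simp add: cnt vadd_comm3)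
  also have "\<dots> = (\<Sum>c\<in>C. \<Sum>p\<in>EE. if hwt (vadd (vadd x c) (ep p)) = j then 1 else 0)"
    by (rule sum.swap)
  also have "\<dots> = (\<Sum>c\<in>C. card {p\<in>EE. hwt (vadd (vadd x c) (ep p)) = j})"
    by (intro sum.cong refl) (simp add: cnt)
  finally show ?thesis .
qed

lemma rhs1:
  assumes "lev x = Suc m"
  shows "(\<Sum>c\<in>C. card {p\<in>EE. hwt (vadd (vadd x c) (ep p)) = m}) = Suc m * f (Suc m) x"
proof -
  have "(\<Sum>c\<in>C. card {p\<in>EE. hwt (vadd (vadd x c) (ep p)) = m})
      = (\<Sum>c\<in>C. if hwt (vadd x c) = Suc m then Suc m else 0)"
  proof (intro sum.cong refl)
    fix c assume c: "c \<in> C"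
    let ?y = "vadd x c"
    have ge: "Suc m \<le> hwt ?y" using lev_le[OF c, of x] assms by simp
    show "card {p\<in>EE. hwt (vadd ?y (ep p)) = m} = (if hwt ?y = Suc m then Suc m else 0)"
    proof (cases "hwt ?y = Suc m")
      case True
      then have "{p\<in>EE. hwt (vadd ?y (ep p)) = m} = {p\<in>EE. Suc (hwt (vadd ?y (ev (fst p) (snd p)))) = hwt ?y}"
        by (auto simp: ep_def)
      then show ?thesis using True card_down[of ?y] by simp
    next
      case False
      have "{p\<in>EE. hwt (vadd ?y (ep p)) = m} = {}"
      proof -
        { fix p assume "hwt (vadd ?y (ep p)) = m"
          then have False using hwt_ev_ge[of ?y "fst p" "snd p"] ge False by (simp add: ep_def) }
        then show ?thesis by auto
      qed
      then show ?thesis using False by simp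
    qed
  qed
  also have "\<dots> = Suc m * f (Suc m) x" by (simp add: sum_if_const f_def)
  finally show ?thesis .
qed

lemma rhs2:
  assumes "lev x = i"
  shows "(\<Sum>c\<in>C. card {p\<in>EE. hwt (vadd (vadd x c) (ep p)) = i})
     = i * (card (UNIV::'b set) - 2) * f i x + Suc i * f (Suc i) x"
proof -
  have "(\<Sum>c\<in>C. card {p\<in>EE. hwt (vadd (vadd x c) (ep p)) = i})
      = (\<Sum>c\<in>C. (if hwt (vadd x c) = i then i * (card (UNIV::'b set) - 2) else 0)
                + (if hwt (vadd x c) = Suc i then Suc i else 0))"
  proof (intro sum.cong refl)
    fix c assume c: "c \<in> C"
    let ?y = "vadd x c"
    have ge: "i \<le> hwt ?y" using lev_le[OF c, of x] assms by simp
    show "card {p\<in>EE. hwt (vadd ?y (ep p)) = i} = (if hwt ?y = i then i * (card (UNIV::'b set) - 2) else 0)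
                + (if hwt ?y = Suc i then Suc i else 0)"
    proof (cases "hwt ?y = i")
      case True
      then have "{p\<in>EE. hwt (vadd ?y (ep p)) = i} = {p\<in>EE. hwt (vadd ?y (ev (fst p) (snd p))) = hwt ?y}"
        by (auto simp: ep_def)
      then show ?thesis using True card_same[of ?y] by simp
    next
      case F1: False
      show ?thesis
      proof (cases "hwt ?y = Suc i")
        case True
        then have "{p\<in>EE. hwt (vadd ?y (ep p)) = i} = {p\<in>EE. Suc (hwt (vadd ?y (ev (fst p) (snd p)))) = hwt ?y}"
          by (auto simp: ep_def)
        then show ?thesis using True card_down[of ?y] by simp
      next
        case False
        have "{p\<in>EE. hwt (vadd ?y (ep p)) = i} = {}"
        proof -
          { fix p assume "hwt (vadd ?y (ep p)) = i"
            then have False using hwt_ev_ge[of ?y "fst p" "snd p"] ge False F1 by (simp add: ep_def) }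
          then show ?thesis by auto
        qed
        then show ?thesis using False F1 by simp
      qed
    qed
  qed
  also have "\<dots> = i * (card (UNIV::'b set) - 2) * f i x + Suc i * f (Suc i) x"
    by (simp add: sum.distrib sum_if_const f_def)
  finally show ?thesis .
qed

lemma lhs1:
  assumes "lev x = Suc m"
  shows "(\<Sum>p\<in>EE. f m (vadd x (ep p))) = Nd x * F m m"
proof -
  have "(\<Sum>p\<in>EE. f m (vadd x (ep p))) = (\<Sum>p\<in>EE. if Suc (lev (vadd x (ep p))) = lev x then F m m else 0)"
  proof (intro sum.cong refl)
    fix p :: "'a \<times> 'b"
    have l2: "lev x \<le> Suc (lev (vadd x (ep p)))" unfolding ep_def by (rule lip2)
    show "f m (vadd x (ep p)) = (if Suc (lev (vadd x (ep p))) = lev x then F m m else 0)"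
    proof (cases "Suc (lev (vadd x (ep p))) = lev x")
      case True then show ?thesis using assms F_eq by simp
    next
      case False
      then have "m < lev (vadd x (ep p))" using l2 assms by simp
      then show ?thesis using False f_low by simp
    qed
  qed
  also have "\<dots> = Nd x * F m m" by (simp add: sum_if_const Nd_def)
  finally show ?thesis .
qed

lemma lhs2:
  assumes "lev x = i"
  shows "(\<Sum>p\<in>EE. f i (vadd x (ep p))) = Ns x * f i x + Nd x * F (i - 1) i"
proof -
  have "(\<Sum>p\<in>EE. f i (vadd x (ep p))) = (\<Sum>p\<in>EE. (if lev (vadd x (ep p)) = lev x then f i x else 0)
         + (if Suc (lev (vadd x (ep p))) = lev x then F (i - 1) i else 0))"
  proof (intro sum.cong refl)
    fix p :: "'a \<times> 'b"
    have l2: "lev x \<le> Suc (lev (vadd x (ep p)))" unfolding ep_def by (rule lip2)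
    have l1: "lev (vadd x (ep p)) \<le> Suc (lev x)" unfolding ep_def by (rule lip1)
    show "f i (vadd x (ep p)) = (if lev (vadd x (ep p)) = lev x then f i x else 0)
         + (if Suc (lev (vadd x (ep p))) = lev x then F (i - 1) i else 0)"
    proof (cases "lev (vadd x (ep p)) = lev x")
      case True
      have "f i (vadd x (ep p)) = f i x" using f_cr[OF True] .
      then show ?thesis using True by simp
    next
      case F1: False
      show ?thesis
      proof (cases "Suc (lev (vadd x (ep p))) = lev x")
        case True then show ?thesis using assms F_eq[of "vadd x (ep p)" "i - 1"] by simp
      next
        case False
        then have "i < lev (vadd x (ep p))" using l1 l2 F1 assms by simp
        then show ?thesis using False F1 f_low by simp
      qed
    qed
  qed
  also have "\<dots> = Ns x * f i x + Nd x * F (i - 1) i"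
    by (simp add: sum.distrib sum_if_const Nd_def Ns_def)
  finally show ?thesis .
qed

lemma Nd_eq:
  assumes "lev x = lev x'"
  shows "Nd x = Nd x'"
proof (cases "lev x")
  case 0
  then show ?thesis using assms by (simp add: Nd_def)
next
  case (Suc m)
  obtain p where "p \<in> EE" "lev (vadd x (ev (fst p) (snd p))) = m" using lev_ex_down[OF Suc] by blast
  then have Fpos: "F m m > 0" using F_eq[of "vadd x (ev (fst p) (snd p))" m m] f_pos by metis
  have "Nd x * F m m = Suc m * f (Suc m) x" using lhs1[OF Suc] swap rhs1[OF Suc] by simp
  moreover have "Nd x' * F m m = Suc m * f (Suc m) x'"
    using lhs1[of x' m] swap rhs1[of x' m] Suc assms by simp
  moreover have "f (Suc m) x = f (Suc m) x'" using f_cr assms by blast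
  ultimately have "Nd x * F m m = Nd x' * F m m" by simp
  then show ?thesis using Fpos by simp
qed

lemma Ns_eq:
  assumes "lev x = lev x'"
  shows "Ns x = Ns x'"
proof -
  let ?i = "lev x"
  have "Ns x * f ?i x + Nd x * F (?i - 1) ?i = ?i * (card (UNIV::'b set) - 2) * f ?i x + Suc ?i * f (Suc ?i) x"
    using lhs2[of x ?i] swap rhs2[of x ?i] by simp
  moreover have "Ns x' * f ?i x' + Nd x' * F (?i - 1) ?i = ?i * (card (UNIV::'b set) - 2) * f ?i x' + Suc ?i * f (Suc ?i) x'"
    using lhs2[of x' ?i] swap rhs2[of x' ?i] assms by simp
  moreover have "f ?i x = f ?i x'" "f (Suc ?i) x = f (Suc ?i) x'" using f_cr assms by blast+
  moreover have "Nd x = Nd x'" using Nd_eq[OF assms] .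
  moreover have "f ?i x > 0" using f_pos by simp
  ultimately have "Ns x * f ?i x = Ns x' * f ?i x" by (metis add_right_cancel)
  then show ?thesis using \<open>f ?i x > 0\<close> by simp
qed

lemma card_EE_split: "card (EE :: ('a \<times> 'b) set) = Nd x + Ns x + Nu x"
proof -
  let ?A = "{p\<in>EE. Suc (lev (vadd x (ep p))) = lev x}"
  let ?B = "{p\<in>EE. lev (vadd x (ep p)) = lev x}"
  let ?D = "{p\<in>EE. lev (vadd x (ep p)) = Suc (lev x)}"
  have "EE = ?A \<union> ?B \<union> ?D"
  proof (intro set_eqI iffI)
    fix p assume p: "p \<in> (EE :: ('a \<times> 'b) set)"
    have l2: "lev x \<le> Suc (lev (vadd x (ep p)))" unfolding ep_def by (rule lip2)
    have l1: "lev (vadd x (ep p)) \<le> Suc (lev x)" unfolding ep_def by (rule lip1)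
    have "lev (vadd x (ep p)) = lev x \<or> Suc (lev (vadd x (ep p))) = lev x \<or> lev (vadd x (ep p)) = Suc (lev x)"
      using l1 l2 by linarith
    then show "p \<in> ?A \<union> ?B \<union> ?D" using p by blast
  next
    fix p assume "p \<in> ?A \<union> ?B \<union> ?D" then show "p \<in> EE" by blast
  qed
  moreover have "card (?A \<union> ?B \<union> ?D) = card ?A + card ?B + card ?D"
  proof -
    have d1: "?A \<inter> ?B = {}" by auto
    have d2: "(?A \<union> ?B) \<inter> ?D = {}" by auto
    have "card (?A \<union> ?B \<union> ?D) = card (?A \<union> ?B) + card ?D"
      by (rule card_Un_disjoint[OF finite finite d2])
    also have "card (?A \<union> ?B) = card ?A + card ?B"
      by (rule card_Un_disjoint[OF finite finite d1])
    finally show ?thesis .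
  qed
  ultimately show ?thesis by (simp add: Nd_def Ns_def Nu_def)
qed

lemma Nu_eq: "lev x = lev x' \<Longrightarrow> Nu x = Nu x'"
  using card_EE_split[of x] card_EE_split[of x'] Nd_eq[of x x'] Ns_eq[of x x'] by linarith

end


context crc begin

definition L where "L l = {x. lev x = l}"

lemma mono_b:
  assumes "lev x = Suc m" "lev (vadd x (ep p0)) = m"
  shows "Nu x \<le> Nu (vadd x (ep p0))"
  unfolding Nu_def
proof (rule card_mono[OF finite], safe)
  fix p assume p: "p \<in> EE" "lev (vadd x (ep p)) = Suc (lev x)"
  have a: "lev (vadd x (ep p)) \<le> Suc (lev (vadd (vadd x (ep p)) (ep p0)))"
    unfolding ep_def by (rule lip2)
  have b: "lev (vadd (vadd x (ep p0)) (ep p)) \<le> Suc (lev (vadd x (ep p0)))"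
    unfolding ep_def by (rule lip1)
  have c: "vadd (vadd x (ep p)) (ep p0) = vadd (vadd x (ep p0)) (ep p)" by (rule vadd_comm3)
  show "lev (vadd (vadd x (ep p0)) (ep p)) = Suc (lev (vadd x (ep p0)))"
    using a b c p assms by simp
qed

lemma mono_c:
  assumes "lev x = Suc m" "lev (vadd x (ep p0)) = m"
  shows "Nd (vadd x (ep p0)) \<le> Nd x"
  unfolding Nd_def
proof (rule card_mono[OF finite], safe)
  fix p assume p: "p \<in> EE" "Suc (lev (vadd (vadd x (ep p0)) (ep p))) = lev (vadd x (ep p0))"
  have a: "lev (vadd x (ep p)) \<le> Suc (lev (vadd (vadd x (ep p)) (ep p0)))"
    unfolding ep_def by (rule lip2)
  have b: "lev x \<le> Suc (lev (vadd x (ep p)))"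
    unfolding ep_def by (rule lip2)
  have c: "vadd (vadd x (ep p)) (ep p0) = vadd (vadd x (ep p0)) (ep p)" by (rule vadd_comm3)
  show "Suc (lev (vadd x (ep p))) = lev x"
    using a b c p assms by simp
qed

lemma edge_count: "(\<Sum>x\<in>L i. Nu x) = (\<Sum>y\<in>L (Suc i). Nd y)"
proof -
  let ?A = "Sigma (L i) (\<lambda>x. {p\<in>EE. lev (vadd x (ep p)) = Suc (lev x)})"
  let ?B = "Sigma (L (Suc i)) (\<lambda>y. {p\<in>EE. Suc (lev (vadd y (ep p))) = lev y})"
  let ?g = "\<lambda>(x, p). (vadd x (ep p), (fst p, - snd p))"
  have inv: "?g (?g z) = z" for z :: "('a \<Rightarrow> 'b) \<times> ('a \<times> 'b)"
    by (cases z) (auto simp: ep_def vadd_def ev_def fun_eq_iff)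
  have gA: "?g z \<in> ?B" if "z \<in> ?A" for z
  proof -
    obtain x a b where zz: "z = (x, (a, b))" by (cases z) auto
    from that zz have h: "lev x = i" "b \<noteq> 0" "lev (vadd x (ep (a, b))) = Suc (lev x)"
      by (auto simp: EE_def L_def)
    have cn: "vadd (vadd x (ep (a, b))) (ep (a, - b)) = x" by (simp add: ep_def vadd_ev_cancel)
    show ?thesis using h cn zz by (simp add: L_def EE_def)
  qed
  have gB: "?g z \<in> ?A" if "z \<in> ?B" for z
  proof -
    obtain x a b where zz: "z = (x, (a, b))" by (cases z) auto
    from that zz have h: "lev x = Suc i" "b \<noteq> 0" "Suc (lev (vadd x (ep (a, b)))) = lev x"
      by (auto simp: EE_def L_def)
    have cn: "vadd (vadd x (ep (a, b))) (ep (a, - b)) = x" by (simp add: ep_def vadd_ev_cancel)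
    show ?thesis using h cn zz by (simp add: L_def EE_def)
  qed
  have "bij_betw ?g ?A ?B"
    by (rule bij_betw_byWitness[where f' = ?g]) (use inv gA gB in blast)+
  then have "card ?A = card ?B" by (rule bij_betw_same_card)
  moreover have "card ?A = (\<Sum>x\<in>L i. Nu x)"
    by (subst card_SigmaI) (auto simp: Nu_def)
  moreover have "card ?B = (\<Sum>y\<in>L (Suc i). Nd y)"
    by (subst card_SigmaI) (auto simp: Nd_def)
  ultimately show ?thesis by simp
qed

lemma sum_Nu: "z \<in> L l \<Longrightarrow> (\<Sum>x\<in>L l. Nu x) = card (L l) * Nu z"
proof -
  assume z: "z \<in> L l"
  have "(\<Sum>x\<in>L l. Nu x) = (\<Sum>x\<in>L l. Nu z)"
    by (rule sum.cong[OF refl]) (use z Nu_eq in \<open>auto simp: L_def\<close>)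
  then show ?thesis by simp
qed

lemma sum_Nd: "z \<in> L l \<Longrightarrow> (\<Sum>x\<in>L l. Nd x) = card (L l) * Nd z"
proof -
  assume z: "z \<in> L l"
  have "(\<Sum>x\<in>L l. Nd x) = (\<Sum>x\<in>L l. Nd z)"
    by (rule sum.cong[OF refl]) (use z Nd_eq in \<open>auto simp: L_def\<close>)
  then show ?thesis by simp
qed

lemma main_ineq:
  shows "card (L m) * card (L (Suc (Suc m))) \<le> card (L (Suc m))^2"
proof (cases "L (Suc (Suc m)) = {}")
  case True then show ?thesis by simp
next
  case False
  then obtain y where y: "lev y = Suc (Suc m)" by (auto simp: L_def)
  obtain p0 where p0: "p0 \<in> EE" "lev (vadd y (ep p0)) = Suc m"
    using lev_ex_down[OF y] unfolding ep_def by blast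
  define y' where "y' = vadd y (ep p0)"
  have y': "lev y' = Suc m" using p0 y'_def by simp
  obtain p1 where p1: "p1 \<in> EE" "lev (vadd y' (ep p1)) = m"
    using lev_ex_down[OF y'] unfolding ep_def by blast
  define y'' where "y'' = vadd y' (ep p1)"
  have y'': "lev y'' = m" using p1 y''_def by simp
  define Lm where "Lm = card (L m)"
  define Lmid where "Lmid = card (L (Suc m))"
  define Lt where "Lt = card (L (Suc (Suc m)))"
  define bm where "bm = Nu y''"
  define b where "b = Nu y'"
  define c where "c = Nd y'"
  define cp where "cp = Nd y"
  have e1: "Lm * bm = Lmid * c"
    using edge_count[of m] sum_Nu[of y'' m] sum_Nd[of y' "Suc m"] y' y''
    by (simp add: L_def Lm_def Lmid_def bm_def c_def)
  have e2: "Lmid * b = Lt * cp"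
    using edge_count[of "Suc m"] sum_Nu[of y' "Suc m"] sum_Nd[of y "Suc (Suc m)"] y' y
    by (simp add: L_def Lt_def Lmid_def b_def cp_def)
  have mb: "b \<le> bm" unfolding b_def bm_def y''_def using mono_b[OF y' p1(2)] .
  have mc: "c \<le> cp" unfolding c_def cp_def y'_def using mono_c[OF y p0(2)] .
  have "p0 \<in> {p\<in>EE. Suc (lev (vadd y (ep p))) = lev y}" using p0 y by simp
  then have ne: "{p\<in>EE. Suc (lev (vadd y (ep p))) = lev y} \<noteq> {}" by blast
  have cp0: "cp > 0" unfolding cp_def Nd_def by (rule card_gt_0_iff[THEN iffD2, OF conjI[OF ne finite]])
  have Lt0: "Lt > 0" using False unfolding Lt_def by (simp add: card_gt_0_iff)
  have "b > 0" using e2 cp0 Lt0 by (metis mult_is_0 neq0_conv)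
  then have bm0: "bm > 0" using mb by simp
  have "(Lm * Lt) * (bm * cp) = (Lm * bm) * (Lt * cp)" by simp
  also have "\<dots> = (Lmid * Lmid) * (c * b)" using e1 e2 by simp
  also have "\<dots> \<le> (Lmid * Lmid) * (cp * bm)" using mb mc by (intro mult_le_mono2 mult_le_mono) auto
  finally have "(Lm * Lt) * (bm * cp) \<le> (Lmid * Lmid) * (bm * cp)" by (simp add: mult.commute)
  then have "Lm * Lt \<le> Lmid * Lmid" using bm0 cp0 by simp
  then show ?thesis by (simp add: Lm_def Lt_def Lmid_def power2_eq_square)
qed

lemma coset_mem_same: "z \<in> coset C u \<Longrightarrow> coset C z = coset C u"
proof -
  assume "z \<in> coset C u"
  then obtain c where "c \<in> C" "z = vadd u c" by (auto simp: coset_vadd)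
  then show ?thesis using coset_same by simp
qed

lemma card_L: "card (L l) = card C * num_cosets C l"
proof -
  let ?Q = "{D \<in> cosets C. coset_weight D = l}"
  have U: "\<Union>?Q = L l"
  proof (intro set_eqI iffI)
    fix x assume "x \<in> \<Union>?Q"
    then obtain D u where "x \<in> D" "D = coset C u" "coset_weight D = l" by (auto simp: cosets_def)
    then show "x \<in> L l" using coset_mem_same by (auto simp: L_def lev_def)
  next
    fix x assume "x \<in> L l"
    moreover have "x \<in> coset C x" using zeroC by (force simp: coset_vadd vadd_def)
    ultimately show "x \<in> \<Union>?Q" by (auto simp: L_def lev_def cosets_def)
  qed
  have "card C * card ?Q = card (\<Union>?Q)"
  proof (rule card_partition[OF finite finite])
    fix D assume "D \<in> ?Q"
    then obtain u where "D = coset C u" by (auto simp: cosets_def)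
    then show "card D = card C" by (simp add: coset_vadd card_image inj_on_subset[OF inj_vadd])
  next
    fix D1 D2 assume "D1 \<in> ?Q" "D2 \<in> ?Q" "D1 \<noteq> D2"
    then obtain u1 u2 where "D1 = coset C u1" "D2 = coset C u2" by (auto simp: cosets_def)
    then show "D1 \<inter> D2 = {}" using \<open>D1 \<noteq> D2\<close> coset_mem_same by blast
  qed
  then show ?thesis using U by (simp add: num_cosets_def)
qed

end

theorem corollary5:
  fixes C :: "('n::finite \<Rightarrow> 'a::{finite,field}) set"
  assumes "linear_code C"
    and "projective_code C"
    and "completely_regular C"
    and "1 \<le> i" and "i \<le> covering_radius C - 1"
  shows "(num_cosets C i)^2 \<ge> num_cosets C (i - 1) * num_cosets C (i + 1)"
proof -
  interpret crc C by unfold_locales (use assms in auto)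
  obtain m where m: "i = Suc m" using assms(4) by (cases i) auto
  have "card (L m) * card (L (Suc (Suc m))) \<le> card (L (Suc m))^2" by (rule main_ineq)
  then have "(card C * card C) * (num_cosets C m * num_cosets C (Suc (Suc m)))
      \<le> (card C * card C) * (num_cosets C (Suc m))^2"
    by (simp add: card_L power2_eq_square ac_simps)
  moreover have "card C > 0" using neC by (simp add: card_gt_0_iff)
  ultimately show ?thesis using m by simp
qed

end
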